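(* Let $n\ge2$ be an integer and $p=n(n+1)$. Consider all pairs $(f,c)$ with $c>0$ and $f$ a real solution on $(-1,1)$ of $(1-s^2)f''-2sf'+pf=0$ that extends continuously to $s=1$ with $f(1)>1$, for which there is a point $x\in(-1,1)$ with $f(x)=h_c(x)$, $f'(x)=h_c'(x)$, and $f>h_c$ on $(x,1]$. Then the smallest $c$ for which such a pair exists is $c=\frac{1+z_p}{1-z_p}$.
   Context: $h_c(s)=\big(\frac{1+s}{2}\big)^p-c^p\big(\frac{1-s}{2}\big)^p$ for $s\in[-1,1]$. $L_n$ denotes the Legendre polynomial $L_n(s)=\frac{1}{2^nn!}\frac{d^n}{ds^n}(s^2-1)^n$ (so $L_n(1)=1$), and $z_p$ is the largest zero of $L_n$ in $(-1,1)$. *)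

theory Defs
  imports "HOL-Analysis.Analysis" "HOL-Computational_Algebra.Polynomial"
begin

definition hc :: "nat \<Rightarrow> real \<Rightarrow> real \<Rightarrow> real" where
  "hc p c s = ((1 + s) / 2) ^ p - c ^ p * ((1 - s) / 2) ^ p"

definition legendre :: "nat \<Rightarrow> real poly" where
  "legendre n = smult (1 / (2 ^ n * fact n)) ((pderiv ^^ n) ([:-1, 0, 1:] ^ n))"

definition legendre_max_zero :: "nat \<Rightarrow> real" where
  "legendre_max_zero n = Max {s \<in> {-1<..<1}. poly (legendre n) s = 0}"

end

theory Submission imports Defs begin

lemma Dk_Suc: "(pderiv ^^ Suc k) q = pderiv ((pderiv ^^ k) q)" by simp

lemma Dk_smult: "(pderiv ^^ k) (smult c q) = smult c ((pderiv ^^ k) (q::real poly))"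
  by (induction k) (simp_all add: pderiv_smult)

lemma rod_base:
  "[:-1,0,1:] * pderiv ([:-1,0,1:]^n) = smult (2*real n) ([:0,1:] * [:-1,0,1::real:]^n)"
proof (cases n)
  case 0 then show ?thesis by simp
next
  case (Suc m)
  have d: "pderiv [:-1,0,1::real:] = smult 2 [:0,1:]" by (simp add: pderiv_pCons)
  show ?thesis unfolding Suc pderiv_power_Suc d
    by (simp add: mult_ac)
qed

lemma rod_rel:
  fixes y :: "real poly" and n k :: nat
  defines "y \<equiv> [:-1,0,1:]^n"
  shows "[:-1,0,1:] * (pderiv^^(k+2)) y + smult (2*real k + 2) ([:0,1:] * (pderiv^^(k+1)) y)
     + smult (real k * real k + real k) ((pderiv^^k) y)
   = smult (2*real n) ([:0,1:] * (pderiv^^(k+1)) y + smult (real k + 1) ((pderiv^^k) y))"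
proof (induction k)
  case 0
  have "pderiv ([:-1,0,1:] * pderiv y) = pderiv (smult (2*real n) ([:0,1:] * y))"
    using rod_base[of n] unfolding y_def by simp
  then have "\<forall>x. poly (pderiv ([:-1,0,1:] * pderiv y)) x = poly (pderiv (smult (2*real n) ([:0,1:] * y))) x"
    by simp
  then show ?case
    apply -
    apply (subst poly_eq_poly_eq_iff[symmetric], rule ext)
    apply (simp add: pderiv_mult pderiv_smult pderiv_pCons pderiv_add pderiv_diff pderiv_minus)
    by (simp add: algebra_simps)
next
  case (Suc k)
  from arg_cong[OF Suc.IH, of pderiv] have
    "\<forall>x. poly (pderiv ([:-1,0,1:] * (pderiv^^(k+2)) y + smult (2*real k + 2) ([:0,1:] * (pderiv^^(k+1)) y)
     + smult (real k * real k + real k) ((pderiv^^k) y))) x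
   = poly (pderiv (smult (2*real n) ([:0,1:] * (pderiv^^(k+1)) y + smult (real k + 1) ((pderiv^^k) y)))) x"
    by simp
  then show ?case
    apply -
    apply (subst poly_eq_poly_eq_iff[symmetric], rule ext)
    apply (simp add: pderiv_mult pderiv_smult pderiv_pCons pderiv_add pderiv_diff pderiv_minus del: funpow.simps)
    apply (simp add: algebra_simps)
    done
qed

lemma legendre_ode:
  "(1 - x\<^sup>2) * poly (pderiv (pderiv (legendre n))) x - 2 * x * poly (pderiv (legendre n)) x
     + real (n*(n+1)) * poly (legendre n) x = 0"
proof -
  define y :: "real poly" where "y = [:-1,0,1:]^n"
  define c :: real where "c = 1 / (2 ^ n * fact n)"
  have L: "legendre n = smult c ((pderiv^^n) y)" by (simp add: legendre_def c_def y_def)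
  have d1: "pderiv (legendre n) = smult c ((pderiv^^(n+1)) y)" by (simp add: L pderiv_smult)
  have d2: "pderiv (pderiv (legendre n)) = smult c ((pderiv^^(n+2)) y)" by (simp add: L pderiv_smult)
  have "poly ([:-1,0,1:] * (pderiv^^(n+2)) y + smult (2*real n + 2) ([:0,1:] * (pderiv^^(n+1)) y)
     + smult (real n * real n + real n) ((pderiv^^n) y)) x
   = poly (smult (2*real n) ([:0,1:] * (pderiv^^(n+1)) y + smult (real n + 1) ((pderiv^^n) y))) x"
    using rod_rel[of n n] unfolding y_def by simp
  then have "(x*x - 1) * poly ((pderiv^^(n+2)) y) x + 2 * x * poly ((pderiv^^(n+1)) y) x
     - (real n * real n + real n) * poly ((pderiv^^n) y) x = 0"
    by (simp del: funpow.simps add: algebra_simps)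
  then have "c * ((x*x - 1) * poly ((pderiv^^(n+2)) y) x + 2 * x * poly ((pderiv^^(n+1)) y) x
     - (real n * real n + real n) * poly ((pderiv^^n) y) x) = 0" by simp
  then show ?thesis
    apply (subst d2, subst d1, subst L)
    by (simp del: funpow.simps add: algebra_simps power2_eq_square)
qed

lemma ode_chain:
  fixes q :: "real poly" and P :: real
  assumes E0: "\<And>x. (1 - x\<^sup>2) * poly (pderiv (pderiv q)) x - 2 * x * poly (pderiv q) x + P * poly q x = 0"
  shows "(1 - x\<^sup>2) * poly ((pderiv^^(k+2)) q) x - 2 * (real k + 1) * x * poly ((pderiv^^(k+1)) q) x
     + (P - real k * real k - real k) * poly ((pderiv^^k) q) x = 0"
proof (induction k arbitrary: x)
  case 0
  then show ?case using E0[of x] by (simp add: numeral_2_eq_2)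
next
  case (Suc k)
  define A where "A = [:1,0,-1:] * (pderiv^^(k+2)) q - smult (2*real k + 2) ([:0,1:] * (pderiv^^(k+1)) q)
     + smult (P - real k * real k - real k) ((pderiv^^k) q)"
  have "poly A = poly 0"
  proof
    fix x show "poly A x = poly 0 x" using Suc.IH[of x] unfolding A_def
      by (simp del: funpow.simps add: algebra_simps power2_eq_square)
  qed
  then have "A = 0" by (simp only: poly_eq_poly_eq_iff)
  then have "poly (pderiv A) x = 0" by simp
  then show ?case unfolding A_def
    by (simp add: pderiv_mult pderiv_smult pderiv_pCons pderiv_add pderiv_diff pderiv_minus
         algebra_simps power2_eq_square Dk_Suc[symmetric] del: funpow.simps)
qed

lemma all_deriv_zero:
  fixes q :: "real poly"
  assumes "\<And>k. poly ((pderiv^^k) q) z = 0"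
  shows "q = 0"
  using assms
proof (induction "degree q" arbitrary: q rule: less_induct)
  case less
  show ?case
  proof (cases "degree q = 0")
    case True
    then obtain a where "q = [:a:]" by (metis degree_eq_zeroE)
    with less.prems[of 0] show ?thesis by simp
  next
    case False
    have "pderiv q = 0"
      apply (rule less.hyps)
      using False apply (simp add: degree_pderiv)
      using less.prems by (metis Dk_Suc funpow_Suc_right o_apply)
    with False show ?thesis by (simp add: pderiv_eq_0_iff)
  qed
qed

lemma simple_root:
  fixes q :: "real poly" and P :: real
  assumes E0: "\<And>x. (1 - x\<^sup>2) * poly (pderiv (pderiv q)) x - 2 * x * poly (pderiv q) x + P * poly q x = 0"
    and q: "q \<noteq> 0" and z: "-1 < z" "z < 1" and r: "poly q z = 0"
  shows "poly (pderiv q) z \<noteq> 0"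
proof
  assume d: "poly (pderiv q) z = 0"
  have nz: "1 - z\<^sup>2 \<noteq> 0" proof -
    have "z\<^sup>2 < 1" using z by (simp add: abs_square_less_1)
    then show ?thesis by simp
  qed
  have "poly ((pderiv^^k) q) z = 0 \<and> poly ((pderiv^^(k+1)) q) z = 0" for k
  proof (induction k)
    case 0 then show ?case using r d by simp
  next
    case (Suc k)
    have "(1 - z\<^sup>2) * poly ((pderiv^^(k+2)) q) z = 0"
      using ode_chain[OF E0, of z k] Suc.IH by simp
    with nz Suc.IH show ?case by simp
  qed
  then have "q = 0" by (intro all_deriv_zero[of q z]) blast
  with q show False by simp
qed

lemma nonzero_at_one:
  fixes q :: "real poly" and P :: real
  assumes E0: "\<And>x. (1 - x\<^sup>2) * poly (pderiv (pderiv q)) x - 2 * x * poly (pderiv q) x + P * poly q x = 0"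
    and q: "q \<noteq> 0"
  shows "poly q 1 \<noteq> 0"
proof
  assume r: "poly q 1 = 0"
  have "poly ((pderiv^^k) q) 1 = 0" for k
  proof (induction k)
    case 0 then show ?case using r by simp
  next
    case (Suc k)
    have "- 2 * (real k + 1) * poly ((pderiv^^(k+1)) q) 1 = 0"
      using ode_chain[OF E0, of 1 k] Suc.IH by simp
    then show ?case by simp
  qed
  then have "q = 0" by (intro all_deriv_zero[of q 1]) blast
  with q show False by simp
qed

lemma degree_Dk: "degree ((pderiv^^k) (q::real poly)) = degree q - k"
  by (induction k) (simp_all add: degree_pderiv)

lemma legendre_nonzero:
  assumes "n \<ge> 1" shows "legendre n \<noteq> 0"
proof -
  have dy: "degree ([:-1,0,1::real:]^n) = 2 * n" by (simp add: degree_power_eq)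
  have "degree ((pderiv^^n) ([:-1,0,1::real:]^n)) = n" by (simp add: degree_Dk dy)
  then have "(pderiv^^n) ([:-1,0,1::real:]^n) \<noteq> 0" using assms by auto
  then show ?thesis unfolding legendre_def by simp
qed

lemma dvd_pderiv_pow:
  fixes q :: "real poly"
  assumes "[:-a,1:]^(Suc m) dvd q" shows "[:-a,1:]^m dvd pderiv q"
proof -
  obtain t where t: "q = [:-a,1:]^(Suc m) * t" using assms by (auto elim: dvdE)
  have "[:-a,1:]^m dvd [:-a,1:]^(Suc m) * pderiv t"
    by (rule dvd_mult2[OF le_imp_power_dvd]) simp
  moreover have "[:-a,1:]^m dvd smult (of_nat (Suc m)) (t * [:-a,1:]^m)"
    by (simp add: dvd_smult)
  ultimately show ?thesis unfolding t lemma_order_pderiv1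
    by (intro dvd_add)
qed

lemma dvd_Dk:
  fixes q :: "real poly"
  assumes "[:-a,1:]^m dvd q" "k \<le> m" shows "[:-a,1:]^(m-k) dvd (pderiv^^k) q"
  using assms(2)
proof (induction k)
  case 0 then show ?case using assms(1) by simp
next
  case (Suc k)
  then have "[:-a,1:]^(Suc (m - Suc k)) dvd (pderiv^^k) q" using Suc_diff_Suc by fastforce
  then show ?case by (simp add: dvd_pderiv_pow)
qed

lemma legendre_root_exists:
  assumes "n \<ge> 1" shows "\<exists>s. -1 < s \<and> s < 1 \<and> poly (legendre n) s = 0"
proof -
  define y :: "real poly" where "y = [:-1,0,1:]^n"
  define Y where "Y = (pderiv^^(n-1)) y"
  have "[:-1,0,1::real:] = [:-1,1:] * [:-(-1),1:]" by simp
  then have fac: "y = [:-1,1:]^n * [:-(-1),1:]^n" unfolding y_def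
    by (metis power_mult_distrib)
  have "[:-1,1:]^(n-(n-1)) dvd Y" unfolding Y_def
    by (rule dvd_Dk) (simp_all add: fac)
  then have "[:-1,1:] dvd Y" using assms by simp
  then have Y1: "poly Y 1 = 0" by (simp add: poly_eq_0_iff_dvd)
  have "[:-(-1),1:]^(n-(n-1)) dvd Y" unfolding Y_def
    by (rule dvd_Dk) (simp_all add: fac)
  then have "[:-(-1),1:] dvd Y" using assms by simp
  then have Y2: "poly Y (-1) = 0" using poly_eq_0_iff_dvd[of Y "-1"] by simp
  obtain s where s: "-1 < s" "s < 1" "(poly Y has_real_derivative 0) (at s)"
  proof -
    have c: "continuous_on {-1..1} (poly Y)" by (auto intro!: continuous_intros)
    have d: "poly Y differentiable at x" for x using poly_DERIV real_differentiable_def by blast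
    show ?thesis using Rolle[of "-1" 1 "poly Y", OF _ _ c d] Y1 Y2 that by auto
  qed
  have "poly (pderiv Y) s = 0" using DERIV_unique[OF poly_DERIV s(3)] .
  moreover have "pderiv Y = (pderiv^^n) y" unfolding Y_def using assms
    by (metis Dk_Suc Suc_diff_1 less_le_trans zero_less_one)
  ultimately have "poly (legendre n) s = 0" by (simp add: legendre_def y_def)
  with s show ?thesis by blast
qed

lemma key_facts:
  assumes n: "n \<ge> 2"
  obtains P :: "real poly" where
    "\<And>x. (1 - x\<^sup>2) * poly (pderiv (pderiv P)) x - 2 * x * poly (pderiv P) x + real (n*(n+1)) * poly P x = 0"
    "-1 < legendre_max_zero n" "legendre_max_zero n < 1" "poly P (legendre_max_zero n) = 0"
    "poly (pderiv P) (legendre_max_zero n) > 0"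
    "\<And>s. legendre_max_zero n < s \<Longrightarrow> s \<le> 1 \<Longrightarrow> poly P s > 0"
proof -
  define L where "L = legendre n"
  define z where "z = legendre_max_zero n"
  define Z where "Z = {s \<in> {-1<..<1}. poly L s = 0}"
  have Lnz: "L \<noteq> 0" unfolding L_def using n by (intro legendre_nonzero) simp
  have EL: "(1 - x\<^sup>2) * poly (pderiv (pderiv L)) x - 2 * x * poly (pderiv L) x + real (n*(n+1)) * poly L x = 0" for x
    unfolding L_def by (rule legendre_ode)
  have finZ: "finite Z" unfolding Z_def
    by (rule finite_subset[OF _ poly_roots_finite[OF Lnz]]) auto
  have neZ: "Z \<noteq> {}" unfolding Z_def L_def using legendre_root_exists[of n] n by auto
  have zZ: "z \<in> Z" unfolding z_def legendre_max_zero_def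
    using Max_in[OF finZ neZ] unfolding Z_def L_def .
  have zmax: "s \<le> z" if "s \<in> Z" for s unfolding z_def legendre_max_zero_def
    using Max_ge[OF finZ that] unfolding Z_def L_def .
  have L1: "poly L 1 \<noteq> 0" by (rule nonzero_at_one[OF EL Lnz])
  define \<sigma> where "\<sigma> = sgn (poly L 1)"
  define P where "P = smult \<sigma> L"
  have sig: "\<sigma> \<noteq> 0" unfolding \<sigma>_def using L1 by (simp add: sgn_real_def)
  have EP: "(1 - x\<^sup>2) * poly (pderiv (pderiv P)) x - 2 * x * poly (pderiv P) x + real (n*(n+1)) * poly P x = 0" for x
  proof -
    have "\<sigma> * ((1 - x\<^sup>2) * poly (pderiv (pderiv L)) x - 2 * x * poly (pderiv L) x + real (n*(n+1)) * poly L x) = 0"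
      using EL[of x] by simp
    then show ?thesis unfolding P_def by (simp add: pderiv_smult algebra_simps)
  qed
  have P1: "poly P 1 > 0" unfolding P_def \<sigma>_def using L1 by (simp add: sgn_mult_self_eq abs_mult_self_eq sgn_real_def)
  have Proot: "poly P s = 0 \<longleftrightarrow> poly L s = 0" for s unfolding P_def using sig by simp
  have zin: "-1 < z" "z < 1" "poly P z = 0" using zZ Proot unfolding Z_def by auto
  have pos: "poly P s > 0" if s: "z < s" "s \<le> 1" for s
  proof (rule ccontr)
    assume "\<not> poly P s > 0"
    then have "poly P s < 0 \<or> poly P s = 0" by auto
    then show False
    proof
      assume "poly P s = 0"
      then have "s \<noteq> 1" using P1 by auto
      then have "s \<in> Z" using \<open>poly P s = 0\<close> Proot s zin unfolding Z_def by auto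
      then show False using zmax s by force
    next
      assume neg: "poly P s < 0"
      then have "s < 1" using P1 s by (cases "s = 1") auto
      then obtain t where t: "s < t" "t < 1" "poly P t = 0" using poly_IVT_pos[OF _ neg P1] by auto
      then have "t \<in> Z" using Proot s zin unfolding Z_def by auto
      then show False using zmax s t by force
    qed
  qed
  have d0: "poly (pderiv P) z \<noteq> 0"
    using simple_root[OF EP _ zin] Lnz sig unfolding P_def by simp
  have dpos: "poly (pderiv P) z > 0"
  proof (rule ccontr)
    assume "\<not> ?thesis"
    then have "poly (pderiv P) z < 0" using d0 by simp
    from DERIV_neg_dec_right[OF poly_DERIV this] obtain d where
      d: "d > 0" "\<And>h. h > 0 \<Longrightarrow> h < d \<Longrightarrow> poly P (z + h) < poly P z" by blast
    define h where "h = min (d/2) ((1 - z)/2)"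
    have "h > 0" "h < d" using d zin unfolding h_def by auto
    then have neg: "poly P (z + h) < 0" using d zin by auto
    have "h \<le> (1 - z)/2" unfolding h_def by (rule min.cobounded2)
    then have "z + h \<le> 1" using zin by (simp add: field_simps)
    moreover have "poly P (z + h) > 0" using \<open>h > 0\<close> \<open>z + h \<le> 1\<close> by (intro pos) auto
    ultimately show False using neg by simp
  qed
  show ?thesis using that[OF EP] zin dpos pos unfolding z_def by blast
qed

lemma blowup:
  fixes g g' :: "real \<Rightarrow> real"
  assumes a: "a < 1"
    and dg: "\<And>s. a < s \<Longrightarrow> s < 1 \<Longrightarrow> (g has_real_derivative g' s) (at s)"
    and lb: "\<And>s. a < s \<Longrightarrow> s < 1 \<Longrightarrow> g' s \<ge> k / (1 - s)"
    and k: "k > 0"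
    and lim: "(g \<longlongrightarrow> l) (at_left 1)"
  shows False
proof -
  define t0 where "t0 = (a + 1) / 2"
  have t0: "a < t0" "t0 < 1" using a unfolding t0_def by auto
  define \<psi> where "\<psi> s = g s + k * ln (1 - s)" for s
  have mono: "\<psi> t0 \<le> \<psi> s" if s: "t0 \<le> s" "s < 1" for s
  proof (rule DERIV_nonneg_imp_nondecreasing[OF s(1)])
    fix x assume x: "t0 \<le> x" "x \<le> s"
    then have x': "a < x" "x < 1" using t0 s by auto
    have d1: "((\<lambda>s. 1 - s) has_real_derivative -1) (at x)"
      using DERIV_diff[OF DERIV_const DERIV_ident] by simp
    have d2: "((\<lambda>s. ln (1 - s)) has_real_derivative inverse (1 - x) * -1) (at x)"
      by (rule DERIV_chain2[OF DERIV_ln d1]) (use x' in simp)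
    have D1: "(\<psi> has_real_derivative g' x + k * (inverse (1 - x) * -1)) (at x)"
      unfolding \<psi>_def by (rule DERIV_add[OF dg[OF x'] DERIV_cmult[OF d2]])
    have "0 \<le> g' x + k * (inverse (1 - x) * -1)" using lb[OF x'] by (simp add: divide_inverse)
    with D1 show "\<exists>y. (\<psi> has_real_derivative y) (at x) \<and> 0 \<le> y" by (intro exI conjI)
  qed
  define M where "M = (\<psi> t0 - l - 1) / k"
  have ev1: "eventually (\<lambda>s. g s < l + 1) (at_left 1)"
  proof -
    have "eventually (\<lambda>s. dist (g s) l < 1) (at_left 1)" using tendstoD[OF lim, of 1] by simp
    then show ?thesis by (rule eventually_mono) (simp add: dist_real_def abs_less_iff)
  qed
  define b where "b = max t0 (1 - exp M)"
  have b: "b < 1" unfolding b_def using t0 exp_gt_zero[of M] by simp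
  have ev2: "eventually (\<lambda>s. s \<in> {b<..<1}) (at_left 1)" by (rule eventually_at_left_real[OF b])
  obtain s where s1: "g s < l + 1" and s2: "s \<in> {b<..<1}"
    using eventually_happens'[OF trivial_limit_at_left_real eventually_conj[OF ev1 ev2]] by blast
  have st: "t0 \<le> s" "s < 1" "1 - exp M < s" using s2 unfolding b_def by simp_all
  then have "1 - s < exp M" using st by simp
  then have "ln (1 - s) < ln (exp M)" using st by (subst ln_less_cancel_iff) auto
  then have "ln (1 - s) < M" by simp
  then have "k * ln (1 - s) < \<psi> t0 - l - 1" using k unfolding M_def by (simp add: field_simps)
  moreover have "\<psi> t0 \<le> g s + k * ln (1 - s)" using mono[OF st(1,2)] unfolding \<psi>_def by simp
  ultimately show False using s1 by linarith
qed

lemma one_minus_sq_pos: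
  fixes s :: real assumes "-1 < s" "s < 1" shows "0 < 1 - s\<^sup>2"
proof -
  have "\<bar>s\<bar> < 1" using assms by auto
  then have "s\<^sup>2 < 1" by (simp add: abs_square_less_1)
  then show ?thesis by simp
qed

lemma poly_left_lim: "((\<lambda>s. poly P s) \<longlongrightarrow> poly P (a::real)) (at_left a)"
proof -
  have "(poly P \<longlongrightarrow> poly P a) (at a)" by (rule isContD[OF DERIV_isCont[OF poly_DERIV]])
  then show ?thesis by (rule tendsto_mono[OF at_le, rotated]) simp
qed

lemma wronskian_zero:
  fixes f f' f'' :: "real \<Rightarrow> real" and P :: "real poly" and pp z :: real
  assumes ode: "\<forall>s\<in>{-1<..<1}. (f has_real_derivative f' s) (at s) \<and> (f' has_real_derivative f'' s) (at s)
                   \<and> (1 - s\<^sup>2) * f'' s - 2 * s * f' s + pp * f s = 0"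
    and lim: "(f \<longlongrightarrow> f 1) (at_left 1)"
    and EP: "\<And>x. (1 - x\<^sup>2) * poly (pderiv (pderiv P)) x - 2 * x * poly (pderiv P) x + pp * poly P x = 0"
    and z: "-1 < z" "z < 1" and pos: "\<And>s. z < s \<Longrightarrow> s \<le> 1 \<Longrightarrow> poly P s > 0"
    and s0: "s0 \<in> {-1<..<1}"
  shows "poly P s0 * f' s0 = poly (pderiv P) s0 * f s0"
proof -
  define W where "W s = (1 - s\<^sup>2) * (poly P s * f' s - poly (pderiv P) s * f s)" for s
  have dW: "(W has_real_derivative 0) (at s)" if s: "s \<in> {-1<..<1}" for s
  proof -
    have fd: "(f has_real_derivative f' s) (at s)" and fdd: "(f' has_real_derivative f'' s) (at s)"
      and o: "(1 - s\<^sup>2) * f'' s - 2 * s * f' s + pp * f s = 0" using ode s by auto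
    have d: "(W has_real_derivative
       (- 2 * s) * (poly P s * f' s - poly (pderiv P) s * f s) + (1-s\<^sup>2)*((poly (pderiv P) s * f' s + poly P s * f'' s) - (poly (pderiv (pderiv P)) s * f s + poly (pderiv P) s * f' s))) (at s)"
      unfolding W_def
      by (auto intro!: derivative_eq_intros poly_DERIV fd fdd simp: algebra_simps power2_eq_square)
    have "(- 2 * s) * (poly P s * f' s - poly (pderiv P) s * f s) + (1-s\<^sup>2)*((poly (pderiv P) s * f' s + poly P s * f'' s) - (poly (pderiv (pderiv P)) s * f s + poly (pderiv P) s * f' s))
        = poly P s * ((1 - s\<^sup>2) * f'' s - 2 * s * f' s + pp * f s) - f s * ((1 - s\<^sup>2) * poly (pderiv (pderiv P)) s - 2 * s * poly (pderiv P) s + pp * poly P s)"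
      by (simp add: algebra_simps)
    also have "\<dots> = 0" using o EP[of s] by simp
    finally show ?thesis using d by simp
  qed
  obtain C where C: "\<forall>x\<in>{-1<..<1}. W x = C"
    using has_field_derivative_zero_constant[of "{-1<..<1}" W] dW
    by (metis convex_real_interval(8) has_field_derivative_at_within)
  have "C = 0"
  proof (rule ccontr)
    assume C0: "C \<noteq> 0"
    have "compact (poly P ` {z..1})" by (intro compact_continuous_image continuous_intros) simp
    then obtain B where B: "B > 0" "\<And>x. x \<in> {z..1} \<Longrightarrow> norm (poly P x) \<le> B"
      using compact_imp_bounded bounded_pos by (metis imageI)
    define \<sigma> where "\<sigma> = sgn C"
    define g where "g s = \<sigma> * (f s / poly P s)" for s
    define g' where "g' s = \<bar>C\<bar> / ((1 - s\<^sup>2) * (poly P s)\<^sup>2)" for s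
    define k where "k = \<bar>C\<bar> / (2 * B\<^sup>2)"
    have sC: "\<sigma> * C = \<bar>C\<bar>" unfolding \<sigma>_def by (simp add: abs_sgn)
    have dg: "(g has_real_derivative g' s) (at s)" if s: "z < s" "s < 1" for s
    proof -
      have sI: "s \<in> {-1<..<1}" using s z by auto
      have Ps: "poly P s > 0" using pos s by auto
      have fd: "(f has_real_derivative f' s) (at s)" using ode sI by auto
      have "(g has_real_derivative \<sigma> * ((f' s * poly P s - f s * poly (pderiv P) s) / (poly P s * poly P s))) (at s)"
        unfolding g_def by (intro DERIV_cmult DERIV_divide fd poly_DERIV) (use Ps in simp)
      moreover have "\<sigma> * ((f' s * poly P s - f s * poly (pderiv P) s) / (poly P s * poly P s)) = g' s"
      proof -
        have ne: "1 - s\<^sup>2 \<noteq> 0" using sI one_minus_sq_pos[of s] by auto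
        have "W s = C" using C sI by auto
        then have "f' s * poly P s - f s * poly (pderiv P) s = C / (1 - s\<^sup>2)"
          unfolding W_def using ne by (simp add: field_simps)
        then show ?thesis unfolding g'_def sC[symmetric]
          by (simp add: power2_eq_square divide_divide_eq_left)
      qed
      ultimately show ?thesis by simp
    qed
    have lb: "g' s \<ge> k / (1 - s)" if s: "z < s" "s < 1" for s
    proof -
      have Ps: "poly P s > 0" "poly P s \<le> B" using pos[of s] B(2)[of s] s by auto
      have a1: "0 < 1 - s\<^sup>2" using s z one_minus_sq_pos[of s] by auto
      have "(poly P s)\<^sup>2 \<le> B\<^sup>2" using Ps by (intro power_mono) auto
      moreover have "1 - s\<^sup>2 \<le> 2 * (1 - s)"
      proof -
        have "0 \<le> (1 - s) * (1 - s)" by simp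
        then show ?thesis by (simp add: power2_eq_square algebra_simps)
      qed
      ultimately have le: "(1 - s\<^sup>2) * (poly P s)\<^sup>2 \<le> (2 * (1 - s)) * B\<^sup>2"
        using a1 by (intro mult_mono) auto
      have "\<bar>C\<bar> / ((2 * (1 - s)) * B\<^sup>2) \<le> \<bar>C\<bar> / ((1 - s\<^sup>2) * (poly P s)\<^sup>2)"
        by (rule divide_left_mono[OF le]) (use a1 Ps s B in auto)
      moreover have "k / (1 - s) = \<bar>C\<bar> / ((2 * (1 - s)) * B\<^sup>2)" unfolding k_def by simp
      ultimately show ?thesis unfolding g'_def by simp
    qed
    have kpos: "k > 0" unfolding k_def using C0 B by simp
    have glim: "(g \<longlongrightarrow> \<sigma> * (f 1 / poly P 1)) (at_left 1)"
      unfolding g_def using pos[of 1] z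
      by (intro tendsto_mult tendsto_const tendsto_divide lim poly_left_lim) auto
    show False by (rule blowup[OF z(2) dg lb kpos glim])
  qed
  have ne: "1 - s0\<^sup>2 \<noteq> 0" using s0 one_minus_sq_pos[of s0] by auto
  have "W s0 = 0" using C s0 \<open>C = 0\<close> by auto
  then show ?thesis unfolding W_def using ne by simp
qed

definition hd1 :: "nat \<Rightarrow> real \<Rightarrow> real \<Rightarrow> real" where
  "hd1 p c s = real p / 2 * (((1 + s) / 2) ^ (p - 1) + c ^ p * ((1 - s) / 2) ^ (p - 1))"
definition hd2 :: "nat \<Rightarrow> real \<Rightarrow> real \<Rightarrow> real" where
  "hd2 p c s = real p * (real p - 1) / 4 * (((1 + s) / 2) ^ (p - 2) - c ^ p * ((1 - s) / 2) ^ (p - 2))"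
definition mfun :: "nat \<Rightarrow> real \<Rightarrow> real \<Rightarrow> real" where
  "mfun p c s = ((1 - s) / 2) * ((1 + s) / 2) ^ (p - 1) - c ^ p * ((1 + s) / 2) * ((1 - s) / 2) ^ (p - 1)"

lemma hc_deriv:
  assumes "p \<ge> 1" shows "(hc p c has_real_derivative hd1 p c s) (at s)"
proof -
  obtain q where q: "p = Suc q" using assms by (cases p) auto
  have d1: "((\<lambda>s. (1 + s) / 2) has_real_derivative 1/2) (at s)" by (auto intro!: derivative_eq_intros)
  have d2: "((\<lambda>s. (1 - s) / 2) has_real_derivative -1/2) (at s)" by (auto intro!: derivative_eq_intros)
  have "((\<lambda>s. ((1 + s) / 2) ^ p - c ^ p * ((1 - s) / 2) ^ p) has_real_derivative
      real p * (1/2 * ((1 + s) / 2) ^ (p - Suc 0)) - c ^ p * (real p * (-1/2 * ((1 - s) / 2) ^ (p - Suc 0)))) (at s)"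
    by (intro DERIV_diff DERIV_cmult DERIV_power d1 d2)
  moreover have "real p * (1/2 * ((1 + s) / 2) ^ (p - Suc 0)) - c ^ p * (real p * (-1/2 * ((1 - s) / 2) ^ (p - Suc 0)))
     = hd1 p c s"
  proof -
    define A where "A = ((1 + s) / 2) ^ q"
    define B where "B = ((1 - s) / 2) ^ q"
    show ?thesis unfolding hd1_def q A_def[symmetric] B_def[symmetric] by simp (simp add: algebra_simps)
  qed
  ultimately show ?thesis unfolding hc_def by simp
qed

lemma hd1_deriv:
  assumes "p \<ge> 2" shows "(hd1 p c has_real_derivative hd2 p c s) (at s)"
proof -
  obtain q where q: "p = Suc (Suc q)" using assms by (metis add_2_eq_Suc le_Suc_ex)
  have d1: "((\<lambda>s. (1 + s) / 2) has_real_derivative 1/2) (at s)" by (auto intro!: derivative_eq_intros)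
  have d2: "((\<lambda>s. (1 - s) / 2) has_real_derivative -1/2) (at s)" by (auto intro!: derivative_eq_intros)
  have "((\<lambda>s. real p / 2 * (((1 + s) / 2) ^ (p - 1) + c ^ p * ((1 - s) / 2) ^ (p - 1))) has_real_derivative
      real p / 2 * (real (p - 1) * (1/2 * ((1 + s) / 2) ^ (p - 1 - Suc 0)) + c ^ p * (real (p - 1) * (-1/2 * ((1 - s) / 2) ^ (p - 1 - Suc 0))))) (at s)"
    by (intro DERIV_add DERIV_cmult DERIV_power d1 d2)
  moreover have "real p / 2 * (real (p - 1) * (1/2 * ((1 + s) / 2) ^ (p - 1 - Suc 0)) + c ^ p * (real (p - 1) * (-1/2 * ((1 - s) / 2) ^ (p - 1 - Suc 0))))
     = hd2 p c s"
  proof -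
    define A where "A = ((1 + s) / 2) ^ q"
    define B where "B = ((1 - s) / 2) ^ q"
    have e: "real (p - 1) = real p - 1" using q by simp
    show ?thesis unfolding hd2_def e unfolding q A_def[symmetric] B_def[symmetric] by simp (simp add: algebra_simps)
  qed
  ultimately show ?thesis unfolding hd1_def[abs_def] by simp
qed

lemma h_ode:
  assumes "p \<ge> 2"
  shows "(1 - s\<^sup>2) * hd2 p c s - 2 * s * hd1 p c s + real p * hc p c s = (real p)\<^sup>2 * mfun p c s"
proof -
  obtain q where q: "p = q + 2" using assms by (metis add.commute le_Suc_ex)
  define u where "u = (1 + s) / 2"
  define v where "v = (1 - s) / 2"
  define U where "U = u ^ q"
  define V where "V = v ^ q"
  define C where "C = c ^ p"
  have e: "u ^ (q + 2) = u * u * U" "u ^ (q + 1) = u * U" "v ^ (q + 2) = v * v * V" "v ^ (q + 1) = v * V"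
    unfolding U_def V_def by (simp_all add: power_add power2_eq_square)
  have "(1 - s\<^sup>2) * hd2 p c s - 2 * s * hd1 p c s + real p * hc p c s
     = (1 - s\<^sup>2) * (real p * (real p - 1) / 4 * (U - C * V)) - 2 * s * (real p / 2 * (u * U + C * (v * V)))
       + real p * (u * u * U - C * (v * v * V))"
    unfolding hd2_def hd1_def hc_def C_def[symmetric] unfolding q u_def[symmetric] v_def[symmetric]
    by (simp add: e U_def V_def)
  also have "\<dots> = (real p)\<^sup>2 * (v * (u * U) - C * u * (v * V))"
    unfolding u_def v_def by (simp add: field_simps power2_eq_square)
  also have "\<dots> = (real p)\<^sup>2 * mfun p c s"
    unfolding mfun_def C_def[symmetric] unfolding q u_def[symmetric] v_def[symmetric] by (simp add: e U_def V_def)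
  finally show ?thesis .
qed

lemma mfun_factor:
  assumes "p \<ge> 2"
  shows "mfun p c s = ((1 + s) / 2) * ((1 - s) / 2) * (((1 + s) / 2) ^ (p - 2) - c ^ p * ((1 - s) / 2) ^ (p - 2))"
proof -
  obtain q where q: "p = q + 2" using assms by (metis add.commute le_Suc_ex)
  define u where "u = (1 + s) / 2"
  define v where "v = (1 - s) / 2"
  have "mfun p c s = v * (u * u ^ q) - c ^ p * u * (v * v ^ q)"
    unfolding mfun_def q u_def[symmetric] v_def[symmetric] by simp
  also have "\<dots> = u * v * (u ^ q - c ^ p * v ^ q)" by (simp add: algebra_simps)
  finally show ?thesis unfolding q u_def v_def by simp
qed

lemma pos_mult_neg': "0 < (a::real) \<Longrightarrow> a * x < 0 \<Longrightarrow> x < 0"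
  by (simp add: mult_less_0_iff)

lemma pos_mult_nonneg: "0 < (a::real) \<Longrightarrow> 0 \<le> a * x \<Longrightarrow> 0 \<le> x"
  by (simp add: zero_le_mult_iff)

lemma mfun_mono:
  assumes p: "p \<ge> 3" and c: "c > 0" and st: "-1 < s" "s < t" "t < 1" and m: "mfun p c s \<ge> 0"
  shows "mfun p c t > 0"
proof -
  have q: "p - 2 \<ge> 1" using p by simp
  have p2: "p \<ge> 2" using p by simp
  have uv: "(1 + s) / 2 > 0" "(1 - s) / 2 > 0" "(1 + t) / 2 > 0" "(1 - t) / 2 > 0" using st by auto
  have m': "0 \<le> ((1 + s) / 2) * ((1 - s) / 2) * (((1 + s) / 2) ^ (p - 2) - c ^ p * ((1 - s) / 2) ^ (p - 2))"
    using m unfolding mfun_factor[OF p2] .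
  have "((1 + s) / 2) ^ (p - 2) - c ^ p * ((1 - s) / 2) ^ (p - 2) \<ge> 0"
    by (rule pos_mult_nonneg[OF _ m']) (use uv in simp)
  moreover have "((1 + s) / 2) ^ (p - 2) < ((1 + t) / 2) ^ (p - 2)"
    using uv st q by (intro power_strict_mono) auto
  moreover have "((1 - t) / 2) ^ (p - 2) < ((1 - s) / 2) ^ (p - 2)"
    using uv st q by (intro power_strict_mono) auto
  then have "c ^ p * ((1 - t) / 2) ^ (p - 2) < c ^ p * ((1 - s) / 2) ^ (p - 2)" using c by simp
  ultimately have pos: "((1 + t) / 2) ^ (p - 2) - c ^ p * ((1 - t) / 2) ^ (p - 2) > 0" by linarith
  have "0 < ((1 + t) / 2) * ((1 - t) / 2) * (((1 + t) / 2) ^ (p - 2) - c ^ p * ((1 - t) / 2) ^ (p - 2))"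
    using uv pos by (intro mult_pos_pos) auto
  then show ?thesis unfolding mfun_factor[OF p2] .
qed

definition Kf :: "real poly \<Rightarrow> nat \<Rightarrow> real \<Rightarrow> real \<Rightarrow> real" where
  "Kf P p c s = (1 - s\<^sup>2) * (poly P s * hd1 p c s - poly (pderiv P) s * hc p c s)"

lemma K_deriv:
  assumes p: "p \<ge> 2"
    and EP: "\<And>x. (1 - x\<^sup>2) * poly (pderiv (pderiv P)) x - 2 * x * poly (pderiv P) x + real p * poly P x = 0"
  shows "(Kf P p c has_real_derivative poly P s * ((real p)\<^sup>2 * mfun p c s)) (at s)"
proof -
  have d1: "(hc p c has_real_derivative hd1 p c s) (at s)" by (rule hc_deriv) (use p in simp)
  have d2: "(hd1 p c has_real_derivative hd2 p c s) (at s)" by (rule hd1_deriv[OF p])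
  have d: "(Kf P p c has_real_derivative
       (- 2 * s) * (poly P s * hd1 p c s - poly (pderiv P) s * hc p c s) + (1-s\<^sup>2)*((poly (pderiv P) s * hd1 p c s + poly P s * hd2 p c s) - (poly (pderiv (pderiv P)) s * hc p c s + poly (pderiv P) s * hd1 p c s))) (at s)"
    unfolding Kf_def[abs_def]
    by (auto intro!: derivative_eq_intros poly_DERIV d1 d2 simp: algebra_simps power2_eq_square)
  have "(- 2 * s) * (poly P s * hd1 p c s - poly (pderiv P) s * hc p c s) + (1-s\<^sup>2)*((poly (pderiv P) s * hd1 p c s + poly P s * hd2 p c s) - (poly (pderiv (pderiv P)) s * hc p c s + poly (pderiv P) s * hd1 p c s))
      = poly P s * ((1 - s\<^sup>2) * hd2 p c s - 2 * s * hd1 p c s + real p * hc p c s) - hc p c s * ((1 - s\<^sup>2) * poly (pderiv (pderiv P)) s - 2 * s * poly (pderiv P) s + real p * poly P s)"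
    by (simp add: algebra_simps)
  also have "\<dots> = poly P s * ((real p)\<^sup>2 * mfun p c s)" using EP[of s] h_ode[OF p, of s c] by simp
  finally show ?thesis using d by simp
qed

lemma Kf_one: "Kf P p c 1 = 0" unfolding Kf_def by simp

lemma Kf_root: "poly P z = 0 \<Longrightarrow> Kf P p c z = - (1 - z\<^sup>2) * poly (pderiv P) z * hc p c z"
  unfolding Kf_def by (simp add: algebra_simps)

lemma hc_le0_imp:
  fixes z c :: real
  assumes z: "-1 < z" "z < 1" and c: "c > 0" and p: "p \<ge> 1" and h: "hc p c z \<le> 0"
  shows "(1 + z) / (1 - z) \<le> c"
proof -
  obtain q where q: "p = Suc q" using p by (cases p) auto
  have "((1 + z) / 2) ^ p \<le> c ^ p * ((1 - z) / 2) ^ p"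
    using h unfolding hc_def by simp
  then have "((1 + z) / 2) ^ Suc q \<le> (c * ((1 - z) / 2)) ^ Suc q"
    unfolding q by (simp only: power_mult_distrib)
  then have "(1 + z) / 2 \<le> c * ((1 - z) / 2)"
    by (rule power_le_imp_le_base) (use c z in simp)
  then show ?thesis using z by (simp add: pos_divide_le_eq field_simps)
qed

lemma hc_cs_zero:
  fixes z :: real
  assumes z: "-1 < z" "z < 1"
  shows "hc p ((1 + z) / (1 - z)) z = 0"
proof -
  have "(1 + z) / (1 - z) * ((1 - z) / 2) = (1 + z) / 2" using z by (simp add: field_simps)
  then have "((1 + z) / (1 - z)) ^ p * ((1 - z) / 2) ^ p = ((1 + z) / 2) ^ p"
    by (metis power_mult_distrib)
  then show ?thesis unfolding hc_def by simp
qed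

lemma case3:
  assumes p: "p \<ge> 3" and c: "c > 0"
    and EP: "\<And>x. (1 - x\<^sup>2) * poly (pderiv (pderiv P)) x - 2 * x * poly (pderiv P) x + real p * poly P x = 0"
    and z: "-1 < z" "z < 1" "poly P z = 0" "poly (pderiv P) z > 0"
    and pos: "\<And>s. z < s \<Longrightarrow> s \<le> 1 \<Longrightarrow> poly P s > 0"
    and x: "z < x" "x < 1" and Kx: "Kf P p c x = 0"
  shows "hc p c z < 0"
proof -
  have p2: "p \<ge> 2" using p by simp
  note KD = K_deriv[OF p2 EP, of c]
  have cont: "continuous_on {a..b} (Kf P p c)" for a b
    by (rule DERIV_continuous_on[where D="\<lambda>s. poly P s * ((real p)\<^sup>2 * mfun p c s)"])
       (rule has_field_derivative_at_within[OF KD])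
  have diff: "Kf P p c differentiable (at y)" for y using KD unfolding real_differentiable_def by blast
  have "\<exists>\<xi>>x. \<xi> < 1 \<and> (Kf P p c has_real_derivative 0) (at \<xi>)"
    by (rule Rolle[OF x(2) _ cont diff]) (simp add: Kx Kf_one)
  then obtain \<xi> where xi: "x < \<xi>" "\<xi> < 1" "(Kf P p c has_real_derivative 0) (at \<xi>)" by blast
  have "poly P \<xi> * ((real p)\<^sup>2 * mfun p c \<xi>) = 0" using DERIV_unique[OF KD xi(3)] .
  moreover have "poly P \<xi> > 0" using pos xi x by auto
  moreover have "real p > 0" using p by simp
  ultimately have mxi: "mfun p c \<xi> = 0" by simp
  obtain \<eta> where eta: "z < \<eta>" "\<eta> < x" "Kf P p c x - Kf P p c z = (x - z) * (poly P \<eta> * ((real p)\<^sup>2 * mfun p c \<eta>))"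
    using MVT2[OF x(1), of "Kf P p c" "\<lambda>s. poly P s * ((real p)\<^sup>2 * mfun p c s)", OF KD] by auto
  have "mfun p c \<eta> < 0"
  proof (rule ccontr)
    assume "\<not> mfun p c \<eta> < 0"
    then have "mfun p c \<xi> > 0" using mfun_mono[OF p c, of \<eta> \<xi>] eta x xi z by auto
    with mxi show False by simp
  qed
  moreover have "poly P \<eta> > 0" using pos eta x by auto
  moreover have "(real p)\<^sup>2 > 0" using p by simp
  ultimately have "poly P \<eta> * ((real p)\<^sup>2 * mfun p c \<eta>) < 0"
    by (simp add: mult_pos_neg)
  then have "(x - z) * (poly P \<eta> * ((real p)\<^sup>2 * mfun p c \<eta>)) < 0" using x
    by (simp add: mult_pos_neg)
  then have "Kf P p c z > 0" using eta(3) Kx by linarith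
  then have "- (1 - z\<^sup>2) * poly (pderiv P) z * hc p c z > 0" using Kf_root[OF z(3)] by simp
  then have N: "((1 - z\<^sup>2) * poly (pderiv P) z) * hc p c z < 0" by (simp add: algebra_simps)
  have Q: "(1 - z\<^sup>2) * poly (pderiv P) z > 0" using one_minus_sq_pos[OF z(1,2)] z(4) by simp
  show ?thesis by (rule pos_mult_neg'[OF Q N])
qed

lemma K_neg:
  assumes p: "p \<ge> 3" and c: "c > 0"
    and EP: "\<And>x. (1 - x\<^sup>2) * poly (pderiv (pderiv P)) x - 2 * x * poly (pderiv P) x + real p * poly P x = 0"
    and z: "-1 < z" "z < 1"
    and pos: "\<And>s. z < s \<Longrightarrow> s \<le> 1 \<Longrightarrow> poly P s > 0"
    and Kz: "Kf P p c z = 0" and t: "z < t" "t < 1"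
  shows "Kf P p c t < 0"
proof (rule ccontr)
  assume "\<not> Kf P p c t < 0"
  then have Kt: "Kf P p c t \<ge> 0" by simp
  have p2: "p \<ge> 2" using p by simp
  note KD = K_deriv[OF p2 EP, of c]
  have rp: "(real p)\<^sup>2 > 0" using p by simp
  obtain \<eta>1 where e1: "z < \<eta>1" "\<eta>1 < t" "Kf P p c t - Kf P p c z = (t - z) * (poly P \<eta>1 * ((real p)\<^sup>2 * mfun p c \<eta>1))"
    using MVT2[OF t(1), of "Kf P p c" "\<lambda>s. poly P s * ((real p)\<^sup>2 * mfun p c s)", OF KD] by auto
  have "mfun p c \<eta>1 \<ge> 0"
  proof (rule ccontr)
    assume "\<not> mfun p c \<eta>1 \<ge> 0"
    then have "mfun p c \<eta>1 < 0" by simp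
    moreover have "poly P \<eta>1 > 0" using pos e1 t by auto
    ultimately have "poly P \<eta>1 * ((real p)\<^sup>2 * mfun p c \<eta>1) < 0" using rp by (simp add: mult_pos_neg)
    then have "(t - z) * (poly P \<eta>1 * ((real p)\<^sup>2 * mfun p c \<eta>1)) < 0" using t by (simp add: mult_pos_neg)
    then show False using e1(3) Kz Kt by linarith
  qed
  obtain \<eta>2 where e2: "t < \<eta>2" "\<eta>2 < 1" "Kf P p c 1 - Kf P p c t = (1 - t) * (poly P \<eta>2 * ((real p)\<^sup>2 * mfun p c \<eta>2))"
    using MVT2[OF t(2), of "Kf P p c" "\<lambda>s. poly P s * ((real p)\<^sup>2 * mfun p c s)", OF KD] by auto
  have "mfun p c \<eta>2 > 0" using mfun_mono[OF p c, of \<eta>1 \<eta>2] \<open>mfun p c \<eta>1 \<ge> 0\<close> e1 e2 z by auto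
  moreover have "poly P \<eta>2 > 0" using pos e2 t by auto
  ultimately have "(1 - t) * (poly P \<eta>2 * ((real p)\<^sup>2 * mfun p c \<eta>2)) > 0" using rp t by simp
  then show False using e2(3) Kf_one[of P p c] Kt by linarith
qed

lemma member_pos:
  assumes p: "p \<ge> 3" and c: "c > 0"
    and EP: "\<And>x. (1 - x\<^sup>2) * poly (pderiv (pderiv P)) x - 2 * x * poly (pderiv P) x + real p * poly P x = 0"
    and z: "-1 < z" "z < 1" "poly P z = 0" "poly (pderiv P) z > 0"
    and pos: "\<And>s. z < s \<Longrightarrow> s \<le> 1 \<Longrightarrow> poly P s > 0"
    and hz: "hc p c z = 0"
    and a: "a = hd1 p c z / poly (pderiv P) z"
    and y: "z < y" "y \<le> 1"
  shows "a * poly P y > hc p c y"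
proof -
  have p1: "p \<ge> 1" using p by simp
  have Kz: "Kf P p c z = 0" using Kf_root[OF z(3)] hz by simp
  define D where "D s = a * poly P s - hc p c s" for s
  define D' where "D' s = a * poly (pderiv P) s - hd1 p c s" for s
  define R where "R s = D s / poly P s" for s
  define R' where "R' s = (D' s * poly P s - D s * poly (pderiv P) s) / (poly P s * poly P s)" for s
  have dD: "(D has_real_derivative D' s) (at s)" for s
    unfolding D_def[abs_def] D'_def by (intro DERIV_diff DERIV_cmult poly_DERIV hc_deriv p1)
  have dR: "(R has_real_derivative R' s) (at s)" if "z < s" "s \<le> 1" for s
    unfolding R_def[abs_def] R'_def using pos[OF that] by (intro DERIV_divide dD poly_DERIV) auto
  have R'pos: "R' s > 0" if s: "z < s" "s < 1" for s
  proof -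
    have Ps: "poly P s > 0" using pos s by auto
    have ne: "1 - s\<^sup>2 > 0" using one_minus_sq_pos[of s] s z by auto
    have "Kf P p c s < 0" by (rule K_neg[OF p c EP z(1,2) pos Kz s])
    then have "poly P s * hd1 p c s - poly (pderiv P) s * hc p c s < 0"
      unfolding Kf_def using ne by (simp add: mult_less_0_iff)
    moreover have "D' s * poly P s - D s * poly (pderiv P) s = - (poly P s * hd1 p c s - poly (pderiv P) s * hc p c s)"
      unfolding D_def D'_def by (simp add: algebra_simps)
    ultimately have "D' s * poly P s - D s * poly (pderiv P) s > 0" by simp
    then show ?thesis unfolding R'_def using Ps by simp
  qed
  have cont: "continuous_on {l..u} R" if "z < l" "u \<le> 1" for l u
  proof (rule continuous_at_imp_continuous_on, rule ballI)
    fix x assume "x \<in> {l..u}"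
    then have "z < x" "x \<le> 1" using that by auto
    then show "isCont R x" by (rule DERIV_isCont[OF dR])
  qed
  have mono: "R l < R u" if "z < l" "l < u" "u \<le> 1" for l u
  proof (rule DERIV_pos_imp_increasing_open[OF that(2)])
    fix x assume x: "l < x" "x < u"
    have "(R has_real_derivative R' x) (at x)" using x that by (intro dR) auto
    moreover have "R' x > 0" using x that by (intro R'pos) auto
    ultimately show "\<exists>y. (R has_real_derivative y) (at x) \<and> 0 < y" by (intro exI conjI)
  next
    show "continuous_on {l..u} R" using that by (intro cont) auto
  qed
  have Dz: "D z = 0" unfolding D_def using z(3) hz by simp
  have D'z: "D' z = 0" unfolding D'_def a using z(4) by simp
  have lim: "(R \<longlongrightarrow> 0) (at_right z)"
  proof -
    have l1: "((\<lambda>s. (D s - D z) / (s - z)) \<longlongrightarrow> D' z) (at_right z)"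
      using dD[of z] unfolding has_field_derivative_iff
      by (rule tendsto_mono[OF at_le, rotated]) simp
    have l2: "((\<lambda>s. (poly P s - poly P z) / (s - z)) \<longlongrightarrow> poly (pderiv P) z) (at_right z)"
      using poly_DERIV[of P z] unfolding has_field_derivative_iff
      by (rule tendsto_mono[OF at_le, rotated]) simp
    have l3: "((\<lambda>s. ((D s - D z) / (s - z)) / ((poly P s - poly P z) / (s - z))) \<longlongrightarrow> D' z / poly (pderiv P) z) (at_right z)"
      by (rule tendsto_divide[OF l1 l2]) (use z in simp)
    have ev: "eventually (\<lambda>s. ((D s - D z) / (s - z)) / ((poly P s - poly P z) / (s - z)) = R s) (at_right z)"
      using eventually_at_right_real[OF z(2)]
    proof (rule eventually_mono)
      fix s assume "s \<in> {z<..<1}"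
      then have "s - z \<noteq> 0" "poly P s \<noteq> 0" using pos[of s] by auto
      then show "((D s - D z) / (s - z)) / ((poly P s - poly P z) / (s - z)) = R s"
        unfolding R_def using Dz z(3) by (simp add: field_simps)
    qed
    show ?thesis using Lim_transform_eventually[OF l3 ev] D'z by simp
  qed
  define s' where "s' = (z + y) / 2"
  have s': "z < s'" "s' < y" using y unfolding s'_def by auto
  have "0 \<le> R s'"
  proof (rule tendsto_upperbound[OF lim _ trivial_limit_at_right_real])
    show "eventually (\<lambda>t. R t \<le> R s') (at_right z)"
      using eventually_at_right_real[OF s'(1)]
      by (rule eventually_mono) (use mono s' y in force)
  qed
  also have "R s' < R y" using mono[OF s'(1) s'(2) y(2)] .
  finally have "R y > 0" .
  then have "D y > 0" using pos[OF y] unfolding R_def by (simp add: zero_less_divide_iff)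
  then show ?thesis unfolding D_def by simp
qed

theorem theorem5p2:
  fixes n :: nat
  assumes "n \<ge> 2"
  defines "p \<equiv> n * (n + 1)"
  defines "S \<equiv> {c :: real. c > 0 \<and>
       (\<exists>(f :: real \<Rightarrow> real) f' f''.
          (\<forall>s \<in> {-1<..<1}. (f has_real_derivative f' s) (at s)
                          \<and> (f' has_real_derivative f'' s) (at s)
                          \<and> (1 - s\<^sup>2) * f'' s - 2 * s * f' s + real p * f s = 0)
        \<and> (f \<longlongrightarrow> f 1) (at_left 1)
        \<and> f 1 > 1
        \<and> (\<exists>x \<in> {-1<..<1}. f x = hc p c x \<and> f' x = deriv (hc p c) x
                            \<and> (\<forall>y \<in> {x<..1}. f y > hc p c y)))}"
  defines "z \<equiv> legendre_max_zero n"
  shows "(1 + z) / (1 - z) \<in> S \<and> (\<forall>c \<in> S. (1 + z) / (1 - z) \<le> c)"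
proof -
  have p3: "p \<ge> 3"
  proof -
    have "2 * 3 \<le> n * (n + 1)" by (rule mult_le_mono) (use assms(1) in auto)
    then show ?thesis unfolding p_def by simp
  qed
  have p1: "p \<ge> 1" and p2: "p \<ge> 2" using p3 by auto
  obtain P :: "real poly" where
    EP0: "\<And>x. (1 - x\<^sup>2) * poly (pderiv (pderiv P)) x - 2 * x * poly (pderiv P) x + real (n*(n+1)) * poly P x = 0"
    and zf0: "-1 < legendre_max_zero n" "legendre_max_zero n < 1" "poly P (legendre_max_zero n) = 0"
       "poly (pderiv P) (legendre_max_zero n) > 0"
    and pos0: "\<And>s. legendre_max_zero n < s \<Longrightarrow> s \<le> 1 \<Longrightarrow> poly P s > 0"
    using key_facts[OF assms(1)] by blast
  have EP: "\<And>x. (1 - x\<^sup>2) * poly (pderiv (pderiv P)) x - 2 * x * poly (pderiv P) x + real p * poly P x = 0"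
    using EP0 unfolding p_def .
  have zf: "-1 < z" "z < 1" "poly P z = 0" "poly (pderiv P) z > 0" using zf0 unfolding z_def by auto
  have pos: "\<And>s. z < s \<Longrightarrow> s \<le> 1 \<Longrightarrow> poly P s > 0" using pos0 unfolding z_def by auto
  define cs where "cs = (1 + z) / (1 - z)"
  have cs: "cs > 0" unfolding cs_def using zf by simp
  have dhc: "deriv (hc p c) s = hd1 p c s" for c s by (rule DERIV_imp_deriv[OF hc_deriv[OF p1]])
  have mem: "cs \<in> S"
  proof -
    have hz: "hc p cs z = 0" unfolding cs_def by (rule hc_cs_zero[OF zf(1,2)])
    define a where "a = hd1 p cs z / poly (pderiv P) z"
    have gt: "a * poly P y > hc p cs y" if "z < y" "y \<le> 1" for y
      by (rule member_pos[OF p3 cs EP zf pos hz a_def that])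
    have az: "a * poly (pderiv P) z = hd1 p cs z" unfolding a_def using zf(4) by simp
    have h1: "hc p cs 1 = 1" unfolding hc_def using p1 by simp
    define f where "f s = a * poly P s" for s
    define f' where "f' s = a * poly (pderiv P) s" for s
    define f'' where "f'' s = a * poly (pderiv (pderiv P)) s" for s
    have ode: "\<forall>s \<in> {-1<..<1}. (f has_real_derivative f' s) (at s)
                          \<and> (f' has_real_derivative f'' s) (at s)
                          \<and> (1 - s\<^sup>2) * f'' s - 2 * s * f' s + real p * f s = 0"
    proof
      fix s :: real
      have "a * ((1 - s\<^sup>2) * poly (pderiv (pderiv P)) s - 2 * s * poly (pderiv P) s + real p * poly P s) = 0"
        using EP[of s] by simp
      then have "(1 - s\<^sup>2) * f'' s - 2 * s * f' s + real p * f s = 0"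
        unfolding f_def f'_def f''_def by (simp add: algebra_simps)
      moreover have "(f has_real_derivative f' s) (at s)" unfolding f_def[abs_def] f'_def
        by (intro DERIV_cmult poly_DERIV)
      moreover have "(f' has_real_derivative f'' s) (at s)" unfolding f'_def[abs_def] f''_def
        by (intro DERIV_cmult poly_DERIV)
      ultimately show "(f has_real_derivative f' s) (at s) \<and> (f' has_real_derivative f'' s) (at s)
                          \<and> (1 - s\<^sup>2) * f'' s - 2 * s * f' s + real p * f s = 0" by simp
    qed
    have lim: "(f \<longlongrightarrow> f 1) (at_left 1)" unfolding f_def
      by (intro tendsto_mult tendsto_const poly_left_lim)
    have f1: "f 1 > 1" unfolding f_def using gt[of 1] zf h1 by simp
    have tang: "f z = hc p cs z \<and> f' z = deriv (hc p cs) z \<and> (\<forall>y \<in> {z<..1}. f y > hc p cs y)"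
      unfolding f_def f'_def dhc using zf hz gt az by auto
    show ?thesis unfolding S_def mem_Collect_eq
      apply (rule conjI[OF cs])
      apply (rule exI[of _ f], rule exI[of _ f'], rule exI[of _ f''])
      apply (intro conjI ode lim f1)
      apply (rule bexI[of _ z])
      using tang zf by auto
  qed
  have low: "cs \<le> c" if cS: "c \<in> S" for c
  proof -
    obtain f f' f'' x where c: "c > 0"
      and ode: "\<forall>s \<in> {-1<..<1}. (f has_real_derivative f' s) (at s)
                          \<and> (f' has_real_derivative f'' s) (at s)
                          \<and> (1 - s\<^sup>2) * f'' s - 2 * s * f' s + real p * f s = 0"
      and lim: "(f \<longlongrightarrow> f 1) (at_left 1)" and x: "x \<in> {-1<..<1}" and fx: "f x = hc p c x"
      and fx': "f' x = deriv (hc p c) x" and gt: "\<forall>y \<in> {x<..1}. f y > hc p c y"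
      using cS unfolding S_def mem_Collect_eq
      apply (elim conjE exE bexE)
      apply (rule that)
      by assumption+
    have W: "poly P s * f' s = poly (pderiv P) s * f s" if "s \<in> {-1<..<1}" for s
      by (rule wronskian_zero[OF ode lim EP zf(1,2) pos that])
    have fx'': "f' x = hd1 p c x" using fx' dhc by simp
    have "hc p c z \<le> 0"
    proof (cases x z rule: linorder_cases)
      case less
      have "poly (pderiv P) z * f z = 0" using W[of z] zf by simp
      then have "f z = 0" using zf(4) by simp
      moreover have "f z > hc p c z" using gt less zf by auto
      ultimately show ?thesis by simp
    next
      case equal
      have "poly (pderiv P) z * f z = 0" using W[of z] zf by simp
      then have "f z = 0" using zf(4) by simp
      then show ?thesis using fx equal by simp
    next
      case greater
      have "Kf P p c x = 0" unfolding Kf_def using W[OF x] fx fx'' by simp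
      then have "hc p c z < 0" using case3[OF p3 c EP zf pos greater] x by auto
      then show ?thesis by simp
    qed
    then show ?thesis unfolding cs_def by (rule hc_le0_imp[OF zf(1,2) c p1])
  qed
  show ?thesis using mem low unfolding cs_def by blast
qed

end
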